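(* Let $T:[0,1]\to[0,1]$ satisfy Condition 1. Suppose the set of distinct values among its slopes is $\{p\bar\Lambda_1,\dots,p\bar\Lambda_\ell\}$ with $\bar\Lambda_1<\dots<\bar\Lambda_\ell$, where $p\in\mathbb N$ and $\bar\Lambda_1,\dots,\bar\Lambda_\ell$ are pairwise relatively prime positive integers, and the slope $p\bar\Lambda_i$ occurs with multiplicity $m_i$ among the branches. Then $T$ is quantizable.
   Context: Let $I=[0,1]$. A map $T:I\to I$ satisfies Condition 1 if there are integers $\Lambda_1,\dots,\Lambda_l\geq 2$ (the slopes, one per branch) with $\sum_{j=1}^l\Lambda_j^{-1}=1$ and $I$ is divided into consecutive intervals $I_1,\dots,I_l$ with $|I_j|=\Lambda_j^{-1}$ such that on $I_j$, $T$ is affine with slope $\Lambda_j$ mapping $I_j$ onto $I$. For $N\in\mathbb N$ let $\mathcal M$ be the partition of $I$ into $E_i=[(i-1)/N,i/N]$, $i=1,\dots,N$. A sequence of such partitions $\mathcal M_\Bbbk$ with sizes $N_\Bbbk$ satisfies Condition 2 if each $N_{\Bbbk+1}/N_\Bbbk$ is an integer greater than one and every endpoint of every $I_j$ is an endpoint of an interval of $\mathcal M_1$. With $B_\Bbbk(i,j)=|E_i\cap T^{-1}E_j|/|E_i|$, $T$ is called quantizable if there is an infinite sequence $\mathcal M_\Bbbk$ satisfying Condition 2 such that for each $\Bbbk$ there is a unitary $N_\Bbbk\times N_\Bbbk$ matrix $U_\Bbbk$ with $B_\Bbbk(j,i)=|U_\Bbbk(i,j)|^2$ for all $i,j$. 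*)

theory Defs
  imports "HOL-Analysis.Analysis"
begin

text \<open>Branches are indexed by j < length Lam (0-based). The left endpoint of the
j-th branch interval I_j is the sum of the lengths of the preceding ones.\<close>
definition branch_pt :: "nat list \<Rightarrow> nat \<Rightarrow> real" where
  "branch_pt Lam j = (\<Sum>k<j. 1 / real (Lam ! k))"

text \<open>Condition 1. I_j = [branch_pt Lam j, branch_pt Lam (j+1)], of length 1/Lam_j;
T is affine with slope Lam_j on (the interior of) I_j, mapping I_j onto [0,1].\<close>
definition cond1 :: "(real \<Rightarrow> real) \<Rightarrow> nat list \<Rightarrow> bool" where
  "cond1 T Lam \<longleftrightarrow>
     Lam \<noteq> [] \<and> (\<forall>j<length Lam. Lam ! j \<ge> 2) \<and>
     (\<Sum>j<length Lam. 1 / real (Lam ! j)) = 1 \<and>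
     T ` {0..1} \<subseteq> {0..1} \<and>
     (\<forall>j<length Lam. \<forall>x. branch_pt Lam j < x \<and> x < branch_pt Lam (Suc j) \<longrightarrow>
         T x = real (Lam ! j) * (x - branch_pt Lam j))"

definition Ecell :: "nat \<Rightarrow> nat \<Rightarrow> real set" where
  "Ecell N i = {real i / real N .. real (Suc i) / real N}"

definition Bmat :: "(real \<Rightarrow> real) \<Rightarrow> nat \<Rightarrow> nat \<Rightarrow> nat \<Rightarrow> real" where
  "Bmat T N i j = measure lebesgue (Ecell N i \<inter> (T -` Ecell N j \<inter> {0..1}))
                   / measure lebesgue (Ecell N i)"

definition unitary_mat :: "nat \<Rightarrow> (nat \<Rightarrow> nat \<Rightarrow> complex) \<Rightarrow> bool" where
  "unitary_mat n U \<longleftrightarrow>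
     (\<forall>i<n. \<forall>j<n. (\<Sum>k<n. U i k * cnj (U j k)) = (if i = j then 1 else 0)) \<and>
     (\<forall>i<n. \<forall>j<n. (\<Sum>k<n. cnj (U k i) * U k j) = (if i = j then 1 else 0))"

text \<open>Condition 2 for a sequence of partition sizes Ns (Ns 0 is the first partition M_1).\<close>
definition cond2 :: "nat list \<Rightarrow> (nat \<Rightarrow> nat) \<Rightarrow> bool" where
  "cond2 Lam Ns \<longleftrightarrow>
     Ns 0 \<ge> 1 \<and> (\<forall>k. Ns k dvd Ns (Suc k) \<and> Ns (Suc k) > Ns k) \<and>
     (\<forall>j\<le>length Lam. \<exists>i\<le>Ns 0. branch_pt Lam j = real i / real (Ns 0))"

definition quantizable :: "(real \<Rightarrow> real) \<Rightarrow> nat list \<Rightarrow> bool" where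
  "quantizable T Lam \<longleftrightarrow>
     (\<exists>Ns. cond2 Lam Ns \<and>
        (\<forall>k. \<exists>U. unitary_mat (Ns k) U \<and>
              (\<forall>i<Ns k. \<forall>j<Ns k. Bmat T (Ns k) j i = (cmod (U i j))\<^sup>2)))"

end

theory Submission
  imports Defs "Jordan_Normal_Form.Determinant"
begin

lemma unitary_from_cols:
  assumes "\<forall>i<n. \<forall>j<n. (\<Sum>k<n. cnj (U k i) * U k j) = (if i = j then 1 else 0)"
  shows "unitary_mat n U"
proof -
  define A :: "complex Matrix.mat" where "A = Matrix.mat n n (\<lambda>(i,j). cnj (U j i))"
  define B :: "complex Matrix.mat" where "B = Matrix.mat n n (\<lambda>(i,j). U i j)"
  have A: "A \<in> carrier_mat n n" and B: "B \<in> carrier_mat n n" by (auto simp: A_def B_def)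
  have "A * B = 1\<^sub>m n"
    by (rule eq_matI) (use assms in \<open>auto simp: A_def B_def scalar_prod_def lessThan_atLeast0\<close>)
  hence BA: "B * A = 1\<^sub>m n" using mat_mult_left_right_inverse[OF A B] by blast
  have "(\<Sum>k<n. U i k * cnj (U j k)) = (if i = j then 1 else 0)" if "i<n" "j<n" for i j
  proof -
    have "(B * A) $$ (i,j) = (1\<^sub>m n :: complex Matrix.mat) $$ (i,j)" using BA by simp
    thus ?thesis using that by (simp add: A_def B_def scalar_prod_def lessThan_atLeast0)
  qed
  thus ?thesis using assms unfolding unitary_mat_def by blast
qed

lemma sum_cis_zero:
  fixes d :: nat and m :: int
  assumes "d > 0" "\<not> int d dvd m"
  shows "(\<Sum>x<d. cis (2*pi*real_of_int m*real x/real d)) = 0"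
proof -
  define z where "z = cis (2*pi*real_of_int m/real d)"
  have zx: "cis (2*pi*real_of_int m*real x/real d) = z ^ x" for x
  proof -
    have "z^x = cis (real x * (2*pi*real_of_int m/real d))" unfolding z_def by (rule Complex.DeMoivre)
    thus ?thesis by (simp add: field_simps)
  qed
  have zd: "z ^ d = 1"
  proof -
    have "z^d = cis (real d * (2*pi*real_of_int m/real d))" unfolding z_def by (rule Complex.DeMoivre)
    also have "\<dots> = cis (2*pi*real_of_int m)" using assms(1) by simp
    also have "\<dots> = 1" by (rule cis_multiple_2pi) simp
    finally show ?thesis .
  qed
  have "z \<noteq> 1"
  proof
    assume "z = 1"
    hence "cos (2*pi*real_of_int m/real d) = 1" by (simp add: z_def cis.code complex_eq_iff)
    then obtain x :: int where "2*pi*real_of_int m/real d = real_of_int x * 2 * pi"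
      by (auto simp: cos_one_2pi_int)
    hence "real_of_int m = real_of_int x * real d" using assms(1) by (simp add: field_simps)
    hence "m = x * int d" by (metis of_int_eq_iff of_int_mult of_int_of_nat_eq)
    thus False using assms(2) by simp
  qed
  thus ?thesis unfolding zx using geometric_sum[of z d] zd by simp
qed

lemma sum_shift_ivl: fixes g :: "nat \<Rightarrow> 'a::comm_monoid_add" and p :: nat shows "sum g {a..<a+p} = (\<Sum>r<p. g (a+r))"
  by (induct p) (simp_all add: atLeastLessThanSuc add.commute)

lemma sum_split_blocks:
  fixes g :: "nat \<Rightarrow> 'a::comm_monoid_add"
  shows "(\<Sum>i<p*M. g i) = (\<Sum>q<M. \<Sum>r<p. g (q*p + r))"
proof -
  have "(\<Sum>i<p*M. g i) = (\<Sum>q<M. sum g {q*p..<q*p+p})"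
    using sum.nat_group[of g p M] by (simp add: mult.commute)
  also have "\<dots> = (\<Sum>q<M. \<Sum>r<p. g (q*p + r))"
  proof (rule sum.cong[OF refl])
    fix q
    show "sum g {q*p..<q*p+p} = (\<Sum>r<p. g (q*p + r))"
      by (rule sum_shift_ivl)
  qed
  finally show ?thesis .
qed

definition Uf :: "nat \<Rightarrow> (nat\<Rightarrow>nat) \<Rightarrow> (nat\<Rightarrow>nat) \<Rightarrow> (nat\<Rightarrow>nat) \<Rightarrow> (nat\<Rightarrow>nat) \<Rightarrow> nat \<Rightarrow> nat \<Rightarrow> complex" where
"Uf p d B s k i j = (if B j \<le> i div p \<and> i div p < B j + d j
   then complex_of_real (1 / sqrt (real p * real (d j))) *
        cis (2*pi*(real (k j) * real (i div p) / real (d j) + real (s j) * real (i mod p) / real p))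
   else 0)"

lemma Uf_prod:
  assumes "r < p"
  shows "cnj (Uf p d B s k (q*p+r) j) * Uf p d B s k (q*p+r) j' =
    (if (B j \<le> q \<and> q < B j + d j) \<and> (B j' \<le> q \<and> q < B j' + d j')
     then complex_of_real (1 / sqrt (real p * real (d j)) * (1 / sqrt (real p * real (d j')))) *
       cis (2*pi*(real (k j') * real q / real (d j') - real (k j) * real q / real (d j))) *
       cis (2*pi*real_of_int (int (s j') - int (s j)) * real r / real p)
     else 0)"
proof -
  have dv: "(q*p+r) div p = q" "(q*p+r) mod p = r" using assms by auto
  have "cis (- (2*pi*(real (k j) * real q / real (d j) + real (s j) * real r / real p))) *
        cis (2*pi*(real (k j') * real q / real (d j') + real (s j') * real r / real p)) =
        cis (2*pi*(real (k j') * real q / real (d j') - real (k j) * real q / real (d j))) *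
        cis (2*pi*real_of_int (int (s j') - int (s j)) * real r / real p)"
    unfolding cis_mult by (rule arg_cong[where f=cis]) (simp add: algebra_simps diff_divide_distrib add_divide_distrib)
  thus ?thesis unfolding Uf_def dv by (auto simp: cis_cnj mult_ac)
qed

lemma small_not_dvd:
  fixes m :: int assumes "m \<noteq> 0" "\<bar>m\<bar> < int p" shows "\<not> int p dvd m"
proof
  assume "int p dvd m"
  then obtain t where t: "m = int p * t" by (auto simp: dvd_def)
  with assms(1) have "t \<noteq> 0" by auto
  hence "1 \<le> \<bar>t\<bar>" by simp
  hence "int p * 1 \<le> int p * \<bar>t\<bar>" by (intro mult_left_mono) auto
  thus False using assms(2) t by (simp add: abs_mult)
qed

lemma sum_ind:
  fixes f :: "nat \<Rightarrow> 'a::comm_monoid_add"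
  assumes "B + d \<le> M"
  shows "(\<Sum>q<M. if B \<le> q \<and> q < B + d then f q else 0) = (\<Sum>x<d. f (B+x))"
proof -
  have "(\<Sum>q<M. if B \<le> q \<and> q < B + d then f q else 0) = (\<Sum>q<M. if q \<in> {B..<B+d} then f q else 0)"
    by (intro sum.cong) auto
  also have "\<dots> = sum f ({..<M} \<inter> {B..<B+d})" using sum.inter_restrict[of "{..<M}" f "{B..<B+d}"] by simp
  also have "{..<M} \<inter> {B..<B+d} = {B..<B+d}" using assms by auto
  also have "sum f {B..<B+d} = (\<Sum>x<d. f (B+x))" by (rule sum_shift_ivl)
  finally show ?thesis .
qed

lemma blocks_disjoint:
  fixes dd b b' q :: nat
  assumes "b \<noteq> b'" "dd*b \<le> q" "q < dd*b + dd" "dd*b' \<le> q" "q < dd*b' + dd"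
  shows False
proof (cases "b < b'")
  case True
  hence "dd*(b+1) \<le> dd*b'" by (intro mult_le_mono2) auto
  thus False using assms by simp
next
  case False
  hence "dd*(b'+1) \<le> dd*b" using assms(1) by (intro mult_le_mono2) auto
  thus False using assms by simp
qed

lemma Uf_cols:
  assumes p: "p > 0" and N: "N = p*M"
  and H: "\<And>j. j<N \<Longrightarrow> d j > 0 \<and> d j dvd B j \<and> B j + d j \<le> M \<and> s j < p \<and> k j < d j"
  and P1: "\<And>j j'. j<N \<Longrightarrow> j'<N \<Longrightarrow> j\<noteq>j' \<Longrightarrow> s j = s j' \<Longrightarrow> d j = d j' \<and> (B j \<noteq> B j' \<or> k j \<noteq> k j')"
  and jN: "j<N" "j'<N"
  shows "(\<Sum>i<N. cnj (Uf p d B s k i j) * Uf p d B s k i j') = (if j=j' then 1 else 0)"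
proof -
  let ?U = "Uf p d B s k"
  define P where "P q \<longleftrightarrow> (B j \<le> q \<and> q < B j + d j) \<and> (B j' \<le> q \<and> q < B j' + d j')" for q
  define C where "C = complex_of_real (1 / sqrt (real p * real (d j)) * (1 / sqrt (real p * real (d j'))))"
  define E where "E q = cis (2*pi*(real (k j') * real q / real (d j') - real (k j) * real q / real (d j)))" for q
  define R where "R r = cis (2*pi*real_of_int (int (s j') - int (s j)) * real r / real p)" for r
  have "(\<Sum>i<N. cnj (?U i j) * ?U i j') = (\<Sum>q<M. \<Sum>r<p. cnj (?U (q*p+r) j) * ?U (q*p+r) j')"
    unfolding N by (rule sum_split_blocks)
  also have "\<dots> = (\<Sum>q<M. \<Sum>r<p. (if P q then C * E q else 0) * R r)"
    by (intro sum.cong refl) (auto simp: Uf_prod P_def C_def E_def R_def)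
  also have "\<dots> = (\<Sum>q<M. (if P q then C * E q else 0) * (\<Sum>r<p. R r))"
    by (simp add: sum_distrib_left)
  finally have main: "(\<Sum>i<N. cnj (?U i j) * ?U i j') = (\<Sum>q<M. (if P q then C * E q else 0) * (\<Sum>r<p. R r))" .
  show ?thesis
  proof (cases "s j = s j'")
    case False
    have "(\<Sum>r<p. R r) = 0"
      unfolding R_def using H[OF jN(1)] H[OF jN(2)] False p
      by (intro sum_cis_zero small_not_dvd) auto
    thus ?thesis using main False by auto
  next
    case ss: True
    have R1: "(\<Sum>r<p. R r) = of_nat p" by (simp add: R_def ss)
    show ?thesis
    proof (cases "j = j'")
      case True
      have E1: "E q = 1" for q by (simp add: E_def True)
      have "(\<Sum>i<N. cnj (?U i j) * ?U i j') = (\<Sum>q<M. if B j \<le> q \<and> q < B j + d j then C * of_nat p else 0)"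
        unfolding main R1 by (intro sum.cong) (auto simp: P_def True E1)
      also have "\<dots> = (\<Sum>x<d j. C * of_nat p)" using H[OF jN(1)] by (intro sum_ind) auto
      also have "\<dots> = 1" using H[OF jN(1)] p unfolding C_def True
        by (simp add: real_sqrt_mult[symmetric] field_simps)
      finally show ?thesis using True by simp
    next
      case False
      from P1[OF jN False ss] have dd: "d j = d j'" and alt: "B j \<noteq> B j' \<or> k j \<noteq> k j'" by auto
      obtain b where b: "B j = d j * b" using H[OF jN(1)] by (auto simp: dvd_def)
      obtain b' where b': "B j' = d j * b'" using H[OF jN(2)] dd by (auto simp: dvd_def)
      show ?thesis
      proof (cases "B j = B j'")
        case False
        hence "b \<noteq> b'" using b b' by auto
        hence "\<not> P q" for q using blocks_disjoint[of b b' "d j" q] unfolding P_def b b' dd by auto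
        thus ?thesis using main \<open>j \<noteq> j'\<close> by simp
      next
        case BB: True
        with alt have kk: "k j \<noteq> k j'" by auto
        define m where "m = int (k j') - int (k j)"
        have Eq: "E (B j + x) = cis (2*pi*real_of_int m*real x/real (d j))" for x
        proof -
          have "E (B j + x) = cis (2*pi*real_of_int (m*int b)) * cis (2*pi*real_of_int m*real x/real (d j))"
            unfolding E_def cis_mult dd[symmetric] b using H[OF jN(1)]
            by (intro arg_cong[where f=cis]) (simp add: m_def field_simps)
          also have "cis (2*pi*real_of_int (m*int b)) = 1" by (rule cis_multiple_2pi) simp
          finally show ?thesis by simp
        qed
        have "(\<Sum>i<N. cnj (?U i j) * ?U i j') = (\<Sum>q<M. if B j \<le> q \<and> q < B j + d j then C * of_nat p * E q else 0)"
          unfolding main R1 by (intro sum.cong) (auto simp: P_def BB dd)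
        also have "\<dots> = (\<Sum>x<d j. C * of_nat p * E (B j + x))" using H[OF jN(1)] by (intro sum_ind) auto
        also have "\<dots> = C * of_nat p * (\<Sum>x<d j. cis (2*pi*real_of_int m*real x/real (d j)))"
          by (simp add: Eq sum_distrib_left)
        also have "(\<Sum>x<d j. cis (2*pi*real_of_int m*real x/real (d j))) = 0"
          using H[OF jN(1)] H[OF jN(2)] kk dd by (intro sum_cis_zero small_not_dvd) (auto simp: m_def)
        finally show ?thesis using False by simp
      qed
    qed
  qed
qed

lemma count_facts:
  fixes Lam Lbar :: "nat list" and p :: nat
  assumes ge2: "\<forall>b<length Lam. Lam!b \<ge> 2" and sum1: "(\<Sum>j<length Lam. 1/real(Lam!j)) = 1"
    and p: "p \<ge> 1"
    and cop: "\<forall>x\<in>set Lbar. \<forall>y\<in>set Lbar. x\<noteq>y \<longrightarrow> coprime x y"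
    and setL: "set Lam = (\<lambda>b. p*b) ` set Lbar"
  shows "\<forall>v\<in>set Lam. (v div p) dvd card {b. b<length Lam \<and> Lam!b = v}"
    and "(\<Sum>v\<in>set Lam. card {b. b<length Lam \<and> Lam!b = v} div (v div p)) = p"
proof -
  define c where "c v = card {b. b<length Lam \<and> Lam!b = v}" for v
  define D where "D = set Lbar"
  have img: "(!) Lam ` {..<length Lam} = set Lam" by (auto simp: in_set_conv_nth)
  have grp: "(\<Sum>v\<in>set Lam. real (c v) / real v) = 1"
  proof -
    have "(\<Sum>j<length Lam. 1/real(Lam!j)) = (\<Sum>v\<in>(!) Lam ` {..<length Lam}. \<Sum>j\<in>{x\<in>{..<length Lam}. Lam!x = v}. 1/real(Lam!j))"
      by (rule sum.image_gen) simp
    also have "\<dots> = (\<Sum>v\<in>set Lam. real (c v) / real v)"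
      unfolding img
    proof (rule sum.cong[OF refl])
      fix v assume "v \<in> set Lam"
      have "(\<Sum>j\<in>{x\<in>{..<length Lam}. Lam!x = v}. 1/real(Lam!j)) = (\<Sum>j\<in>{x\<in>{..<length Lam}. Lam!x = v}. 1/real v)"
        by (rule sum.cong) auto
      also have "\<dots> = real (c v) / real v" by (simp add: c_def)
      finally show "(\<Sum>j\<in>{x\<in>{..<length Lam}. Lam!x = v}. 1/real(Lam!j)) = real (c v) / real v" .
    qed
    finally show ?thesis using sum1 by simp
  qed
  have injp: "inj_on (\<lambda>b. p*b) D" using p by (auto simp: inj_on_def)
  have Dpos: "e > 0" if "e \<in> D" for e
  proof -
    have "p*e \<in> set Lam" using that setL D_def by auto
    then obtain b where "b < length Lam" "Lam!b = p*e" by (auto simp: in_set_conv_nth)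
    thus ?thesis using ge2 by (metis mult_0_right not_numeral_le_zero le_zero_eq neq0_conv)
  qed
  have finD: "finite D" by (simp add: D_def)
  have sumD: "(\<Sum>e\<in>D. real (c (p*e)) / real e) = real p"
  proof -
    have "(\<Sum>v\<in>set Lam. real (c v) / real v) = (\<Sum>e\<in>D. real (c (p*e)) / real (p*e))"
      unfolding setL D_def[symmetric] by (rule sum.reindex[OF injp, unfolded comp_def])
    hence "(\<Sum>e\<in>D. real (c (p*e)) / real (p*e)) = 1" using grp by simp
    hence "real p * (\<Sum>e\<in>D. real (c (p*e)) / real (p*e)) = real p" by simp
    moreover have "real p * (\<Sum>e\<in>D. real (c (p*e)) / real (p*e)) = (\<Sum>e\<in>D. real (c (p*e)) / real e)"
      unfolding sum_distrib_left using p by (intro sum.cong) auto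
    ultimately show ?thesis by metis
  qed
  have dvdD: "e0 dvd c (p*e0)" if e0: "e0 \<in> D" for e0
  proof -
    define Mp where "Mp = \<Prod>(D - {e0})"
    have edvd: "e dvd Mp" if "e \<in> D - {e0}" for e
      unfolding Mp_def using that finD dvd_prodI[of "D - {e0}" e id] by simp
    have "real e0 * real Mp * (\<Sum>e\<in>D. real (c (p*e)) / real e) = real (p*e0*Mp)"
      using sumD by simp
    moreover have "real e0 * real Mp * (\<Sum>e\<in>D. real (c (p*e)) / real e)
        = real (c (p*e0) * Mp + (\<Sum>e\<in>D - {e0}. c (p*e) * (e0 * (Mp div e))))"
    proof -
      have "real e0 * real Mp * (\<Sum>e\<in>D. real (c (p*e)) / real e) =
            real e0 * real Mp * (real (c (p*e0)) / real e0) + (\<Sum>e\<in>D - {e0}. real e0 * real Mp * (real (c (p*e)) / real e))"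
        using e0 finD by (simp add: sum.remove sum_distrib_left algebra_simps)
      also have "real e0 * real Mp * (real (c (p*e0)) / real e0) = real (c (p*e0) * Mp)"
        using Dpos[OF e0] by simp
      also have "(\<Sum>e\<in>D - {e0}. real e0 * real Mp * (real (c (p*e)) / real e)) = (\<Sum>e\<in>D - {e0}. real (c (p*e) * (e0 * (Mp div e))))"
      proof (rule sum.cong[OF refl])
        fix e assume e: "e \<in> D - {e0}"
        have "real Mp / real e = real (Mp div e)" using edvd[OF e] by (simp add: real_of_nat_div)
        thus "real e0 * real Mp * (real (c (p*e)) / real e) = real (c (p*e) * (e0 * (Mp div e)))"
          using Dpos[of e] e by (simp add: field_simps)
      qed
      finally show ?thesis by simp
    qed
    ultimately have eq: "c (p*e0) * Mp + (\<Sum>e\<in>D - {e0}. c (p*e) * (e0 * (Mp div e))) = p*e0*Mp"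
      by (simp only: of_nat_eq_iff)
    have "e0 dvd (\<Sum>e\<in>D - {e0}. c (p*e) * (e0 * (Mp div e)))" by (intro dvd_sum) auto
    moreover have "e0 dvd p*e0*Mp" by simp
    ultimately have "e0 dvd c (p*e0) * Mp" using eq by (metis dvd_add_left_iff)
    moreover have "coprime e0 Mp" unfolding Mp_def
      using cop e0 unfolding D_def by (intro prod_coprime_right) auto
    ultimately show ?thesis using coprime_dvd_mult_left_iff by blast
  qed
  show "\<forall>v\<in>set Lam. (v div p) dvd card {b. b<length Lam \<and> Lam!b = v}"
    using dvdD p unfolding setL D_def c_def by auto
  have "real (\<Sum>v\<in>set Lam. c v div (v div p)) = (\<Sum>e\<in>D. real (c (p*e) div e))"
    unfolding setL D_def[symmetric] of_nat_sum using p by (subst sum.reindex[OF injp]) auto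
  also have "\<dots> = (\<Sum>e\<in>D. real (c (p*e)) / real e)"
    using dvdD by (intro sum.cong) (auto simp: real_of_nat_div)
  also have "\<dots> = real p" by (rule sumD)
  finally show "(\<Sum>v\<in>set Lam. card {b. b<length Lam \<and> Lam!b = v} div (v div p)) = p"
    unfolding c_def by (simp only: of_nat_eq_iff)
qed

lemma labels:
  fixes Lam Lbar :: "nat list" and p :: nat
  assumes ge2: "\<forall>b<length Lam. Lam!b \<ge> 2" and sum1: "(\<Sum>j<length Lam. 1/real(Lam!j)) = 1"
    and p: "p \<ge> 1"
    and cop: "\<forall>x\<in>set Lbar. \<forall>y\<in>set Lbar. x\<noteq>y \<longrightarrow> coprime x y"
    and setL: "set Lam = (\<lambda>b. p*b) ` set Lbar"
  shows "\<exists>lab::nat \<Rightarrow> nat\<times>nat. (\<forall>b<length Lam. fst (lab b) < p \<and> snd (lab b) < Lam!b div p) \<and>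
     (\<forall>b<length Lam. \<forall>b'<length Lam. fst (lab b) = fst (lab b') \<longrightarrow> Lam!b = Lam!b') \<and>
     (\<forall>b<length Lam. \<forall>b'<length Lam. b \<noteq> b' \<and> Lam!b = Lam!b' \<longrightarrow> lab b \<noteq> lab b')"
proof -
  define c where "c v = card {b. b<length Lam \<and> Lam!b = v}" for v
  define dv where "dv v = v div p" for v
  define n where "n v = c v div dv v" for v
  note cf = count_facts[OF ge2 sum1 p cop setL, folded c_def dv_def]
  define A where "A = Sigma (set Lam) (\<lambda>v. {..<n v})"
  have "card A = (\<Sum>v\<in>set Lam. n v)" unfolding A_def by (subst card_SigmaI) auto
  also have "\<dots> = p" using cf(2) unfolding n_def dv_def by simp
  finally have cA: "card A = card {..<p}" by simp
  obtain g where g: "bij_betw g A {..<p}"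
    using finite_same_card_bij[OF _ _ cA] unfolding A_def by auto
  have "\<forall>v. \<exists>h. v\<in>set Lam \<longrightarrow> bij_betw h {b. b<length Lam \<and> Lam!b=v} ({..<n v} \<times> {..<dv v})"
  proof
    fix v
    show "\<exists>h. v\<in>set Lam \<longrightarrow> bij_betw h {b. b<length Lam \<and> Lam!b=v} ({..<n v} \<times> {..<dv v})"
    proof (cases "v \<in> set Lam")
      case True
      have "card {b. b<length Lam \<and> Lam!b=v} = n v * dv v"
        using cf(1) True unfolding n_def c_def by simp
      hence "card {b. b<length Lam \<and> Lam!b=v} = card ({..<n v} \<times> {..<dv v})"
        by (simp add: card_cartesian_product)
      then obtain h where "bij_betw h {b. b<length Lam \<and> Lam!b=v} ({..<n v} \<times> {..<dv v})"
        using finite_same_card_bij[of "{b. b<length Lam \<and> Lam!b=v}" "{..<n v} \<times> {..<dv v}"] by auto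
      thus ?thesis by blast
    qed simp
  qed
  then obtain h where h: "\<And>v. v\<in>set Lam \<Longrightarrow> bij_betw (h v) {b. b<length Lam \<and> Lam!b=v} ({..<n v} \<times> {..<dv v})"
    by metis
  define lab where "lab b = (g (Lam!b, fst (h (Lam!b) b)), snd (h (Lam!b) b))" for b
  have hin: "fst (h (Lam!b) b) < n (Lam!b) \<and> snd (h (Lam!b) b) < dv (Lam!b)" if "b < length Lam" for b
  proof -
    have "Lam!b \<in> set Lam" using that by simp
    from bij_betw_apply[OF h[OF this], of b] that show ?thesis by (auto simp: mem_Times_iff)
  qed
  have Ain: "(Lam!b, fst (h (Lam!b) b)) \<in> A" if "b < length Lam" for b
    using hin[OF that] that unfolding A_def by auto
  show ?thesis
  proof (intro exI[of _ lab] conjI allI impI)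
    fix b assume b: "b < length Lam"
    show "fst (lab b) < p" using bij_betw_apply[OF g Ain[OF b]] by (simp add: lab_def)
    show "snd (lab b) < Lam!b div p" using hin[OF b] by (simp add: lab_def dv_def)
  next
    fix b b' assume b: "b < length Lam" and b': "b' < length Lam" and eq: "fst (lab b) = fst (lab b')"
    have "(Lam!b, fst (h (Lam!b) b)) = (Lam!b', fst (h (Lam!b') b'))"
      using bij_betw_imp_inj_on[OF g] Ain[OF b] Ain[OF b'] eq unfolding lab_def inj_on_def by auto
    thus "Lam!b = Lam!b'" by simp
  next
    fix b b' assume b: "b < length Lam" and b': "b' < length Lam" and ne: "b \<noteq> b' \<and> Lam!b = Lam!b'"
    show "lab b \<noteq> lab b'"
    proof
      assume eq: "lab b = lab b'"
      define v where "v = Lam!b"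
      have v': "Lam!b' = v" using ne v_def by simp
      have "(v, fst (h v b)) = (v, fst (h v b'))"
        using bij_betw_imp_inj_on[OF g] Ain[OF b] Ain[OF b'] eq unfolding lab_def inj_on_def v_def[symmetric] v' by auto
      moreover have "snd (h v b) = snd (h v b')" using eq unfolding lab_def v_def[symmetric] v' by auto
      ultimately have "h v b = h v b'" by (simp add: prod_eq_iff)
      moreover have "v \<in> set Lam" using b v_def by simp
      ultimately have "b = b'" using bij_betw_imp_inj_on[OF h[OF nth_mem[OF b]]] b b' v' v_def unfolding inj_on_def by auto
      thus False using ne by simp
    qed
  qed
qed

lemma fin_null_leb: "finite (S::real set) \<Longrightarrow> S \<in> null_sets lebesgue"
  using negligible_iff_null_sets negligible_finite by blast

lemma leb_Ioo: "(l::real) \<le> u \<Longrightarrow> measure lebesgue {l<..<u} = u - l"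
  by (simp add: measure_lborel_Ioo)

lemma leb_Icc: "(l::real) \<le> u \<Longrightarrow> measure lebesgue {l..u} = u - l"
  by simp

lemma measure_sandwich:
  fixes S Op F :: "real set"
  assumes "Op \<subseteq> S" "S \<subseteq> Op \<union> F" "finite F" "Op \<in> sets lebesgue"
  shows "measure lebesgue S = measure lebesgue Op"
proof -
  have "S = Op \<union> (S \<inter> F)" using assms by auto
  moreover have "S \<inter> F \<in> null_sets lebesgue" using assms(3) by (intro fin_null_leb) auto
  ultimately show ?thesis using measure_Un_null_set[OF assms(4)] by metis
qed

lemma cell_measure:
  fixes T :: "real \<Rightarrow> real" and N Kb j i L :: nat
  assumes N: "N > 0" and L: "L > 0" and jN: "j < N" and Kj: "Kb \<le> j"
   and hT: "\<And>x. real j / real N < x \<Longrightarrow> x < real (Suc j) / real N \<Longrightarrow> T x = real L * (x - real Kb / real N)"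
  shows "Bmat T N j i = (if L*(j-Kb) \<le> i \<and> i < L*(j-Kb) + L then 1 / real L else 0)"
proof -
  define S where "S = Ecell N j \<inter> (T -` Ecell N i \<inter> {0..1})"
  define F0 where "F0 = {real j / real N, real (Suc j) / real N}"
  define y where "y x = real N * real L * x - real L * real Kb" for x
  have NL: "real N > 0" "real L > 0" using N L by auto
  have cell01: "x \<in> {0..1}" if "real j / real N < x" "x < real (Suc j) / real N" for x
  proof -
    have "0 \<le> real j / real N" by simp
    moreover have "real (Suc j) / real N \<le> 1" using jN NL by (simp add: divide_simps)
    ultimately show ?thesis using that unfolding atLeastAtMost_iff by linarith
  qed
  have key: "x \<in> S \<longleftrightarrow> real i \<le> y x \<and> y x \<le> real i + 1"
    if "real j / real N < x" "x < real (Suc j) / real N" for x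
  proof -
    have "T x = y x / real N" using hT[OF that] NL unfolding y_def by (simp add: field_simps)
    hence "T x \<in> Ecell N i \<longleftrightarrow> real i \<le> y x \<and> y x \<le> real i + 1"
      using NL by (simp add: Ecell_def divide_simps add.commute)
    moreover have "x \<in> Ecell N j" using that by (simp add: Ecell_def)
    ultimately show ?thesis using cell01[OF that] unfolding S_def by auto
  qed
  have yb: "real L * (real j - real Kb) < y x \<and> y x < real L * (real j - real Kb) + real L"
    if "real j / real N < x" "x < real (Suc j) / real N" for x
  proof -
    have "real j < real N * x" "real N * x < real j + 1" using that NL by (simp_all add: field_simps)
    hence "real L * real j < real L * (real N * x)" "real L * (real N * x) < real L * (real j + 1)"
      using NL by simp_all
    thus ?thesis unfolding y_def by (simp add: algebra_simps)
  qed
  have SF: "x \<in> S \<Longrightarrow> x \<notin> F0 \<Longrightarrow> real j / real N < x \<and> x < real (Suc j) / real N" for x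
    unfolding S_def F0_def Ecell_def by auto
  have tj: "real (j - Kb) = real j - real Kb" using Kj by simp
  have mE: "measure lebesgue (Ecell N j) = 1 / real N"
    unfolding Ecell_def using NL by (subst leb_Icc) (simp_all add: divide_simps)
  have "measure lebesgue S = (if L*(j-Kb) \<le> i \<and> i < L*(j-Kb) + L then 1 / (real N * real L) else 0)"
  proof (cases "L*(j-Kb) \<le> i \<and> i < L*(j-Kb) + L")
    case True
    define lo where "lo = (real i + real L * real Kb) / (real N * real L)"
    define hi where "hi = (real i + 1 + real L * real Kb) / (real N * real L)"
    have ylo: "real i < y x \<longleftrightarrow> lo < x" "real i \<le> y x \<longleftrightarrow> lo \<le> x"
      "y x < real i + 1 \<longleftrightarrow> x < hi" "y x \<le> real i + 1 \<longleftrightarrow> x \<le> hi" for x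
      unfolding y_def lo_def hi_def using NL by (simp_all add: field_simps)
    have i1: "real L * (real j - real Kb) \<le> real i" "real i + 1 \<le> real L * (real j - real Kb) + real L"
    proof -
      have "real (L*(j-Kb)) \<le> real i" "real (i+1) \<le> real (L*(j-Kb)+L)" using True by (simp_all only: of_nat_le_iff) auto
      thus "real L * (real j - real Kb) \<le> real i" "real i + 1 \<le> real L * (real j - real Kb) + real L"
        unfolding of_nat_mult of_nat_add tj by simp_all
    qed
    have lo_ge: "real j / real N \<le> lo" using i1 NL unfolding lo_def by (simp add: field_simps)
    have hi_le: "hi \<le> real (Suc j) / real N"
    proof -
      have "hi \<le> (real L*(real j+1))/(real N*real L)" unfolding hi_def using i1 NL
        by (intro divide_right_mono) (auto simp: algebra_simps)
      also have "\<dots> = real (Suc j) / real N" using NL by simp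
      finally show ?thesis .
    qed
    have "measure lebesgue S = measure lebesgue {lo<..<hi}"
    proof (rule measure_sandwich[where F = "F0 \<union> {lo, hi}"])
      show "{lo<..<hi} \<subseteq> S"
      proof
        fix x assume x: "x \<in> {lo<..<hi}"
        hence c: "real j / real N < x" "x < real (Suc j) / real N" using lo_ge hi_le by auto
        show "x \<in> S" using key[OF c] ylo x by auto
      qed
      show "S \<subseteq> {lo<..<hi} \<union> (F0 \<union> {lo, hi})"
      proof
        fix x assume x: "x \<in> S"
        show "x \<in> {lo<..<hi} \<union> (F0 \<union> {lo, hi})"
        proof (cases "x \<in> F0")
          case False
          from SF[OF x False] have c: "real j / real N < x" "x < real (Suc j) / real N" by auto
          from key[OF c] x ylo show ?thesis by auto
        qed simp
      qed
    qed (auto simp: F0_def)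
    also have "\<dots> = hi - lo" using NL by (subst leb_Ioo) (simp_all add: lo_def hi_def divide_simps)
    also have "\<dots> = 1 / (real N * real L)" unfolding lo_def hi_def by (simp add: diff_divide_distrib[symmetric])
    finally show ?thesis using True by simp
  next
    case False
    have "S \<subseteq> F0"
    proof
      fix x assume x: "x \<in> S"
      show "x \<in> F0"
      proof (rule ccontr)
        assume nF: "x \<notin> F0"
        from SF[OF x nF] have c: "real j / real N < x" "x < real (Suc j) / real N" by auto
        from key[OF c] x have a: "real i \<le> y x" "y x \<le> real i + 1" by auto
        from yb[OF c] have b: "real L * (real j - real Kb) < y x" "y x < real L * (real j - real Kb) + real L" by auto
        from False have "i + 1 \<le> L*(j-Kb) \<or> L*(j-Kb) + L \<le> i" by auto
        hence "real i + 1 \<le> real L * (real j - real Kb) \<or> real L * (real j - real Kb) + real L \<le> real i"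
          using tj by (metis of_nat_1 of_nat_add of_nat_le_iff of_nat_mult)
        thus False using a b by linarith
      qed
    qed
    hence "S \<in> null_sets lebesgue" by (intro fin_null_leb finite_subset[of S F0]) (auto simp: F0_def)
    hence "measure lebesgue S = 0" by (rule measure_eq_0_null_sets)
    thus ?thesis using False by auto
  qed
  thus ?thesis unfolding Bmat_def S_def[symmetric] mE using NL by auto
qed

definition Kf :: "nat list \<Rightarrow> nat \<Rightarrow> nat \<Rightarrow> nat" where
  "Kf Lam N b = (\<Sum>k<b. N div Lam!k)"

lemma K_bp:
  assumes dv: "\<forall>b<length Lam. Lam!b dvd N" and N: "N > 0" and b: "b \<le> length Lam"
  shows "branch_pt Lam b = real (Kf Lam N b) / real N"
proof -
  have "real (Kf Lam N b) = (\<Sum>k<b. real N / real (Lam!k))"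
    unfolding Kf_def of_nat_sum using dv b by (intro sum.cong) (auto simp: real_of_nat_div)
  also have "\<dots> = real N * branch_pt Lam b" unfolding branch_pt_def sum_distrib_left by simp
  finally show ?thesis using N by simp
qed

lemma K_L:
  assumes dv: "\<forall>b<length Lam. Lam!b dvd N" and N: "N > 0"
    and sum1: "(\<Sum>j<length Lam. 1/real(Lam!j)) = 1"
  shows "Kf Lam N (length Lam) = N"
proof -
  have "branch_pt Lam (length Lam) = 1" using sum1 by (simp add: branch_pt_def)
  hence "real (Kf Lam N (length Lam)) / real N = 1" using K_bp[OF dv N, of "length Lam"] by simp
  thus ?thesis using N by (simp add: divide_eq_1_iff)
qed

lemma K_Suc: "Kf Lam N (Suc b) = Kf Lam N b + N div Lam!b"
  by (simp add: Kf_def)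

lemma K_mono: "b \<le> b' \<Longrightarrow> Kf Lam N b \<le> Kf Lam N b'"
  unfolding Kf_def by (intro sum_mono2) auto

lemma find_branch:
  assumes "j < Kf Lam N (length Lam)"
  defines "b \<equiv> LEAST b. j < Kf Lam N (Suc b)"
  shows "b < length Lam \<and> Kf Lam N b \<le> j \<and> j < Kf Lam N (Suc b)"
proof -
  have ne: "length Lam > 0" using assms(1) by (cases "length Lam") (auto simp: Kf_def)
  have ex: "j < Kf Lam N (Suc (length Lam - 1))" using assms(1) ne by simp
  have 1: "j < Kf Lam N (Suc b)" unfolding b_def by (rule LeastI[of "\<lambda>b. j < Kf Lam N (Suc b)", OF ex])
  have 2: "b \<le> length Lam - 1" unfolding b_def by (rule Least_le[of "\<lambda>b. j < Kf Lam N (Suc b)", OF ex])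
  have 3: "Kf Lam N b \<le> j"
  proof (cases b)
    case 0 thus ?thesis by (simp add: Kf_def)
  next
    case (Suc b0)
    have "\<not> j < Kf Lam N (Suc b0)" using not_less_Least[of b0 "\<lambda>b. j < Kf Lam N (Suc b)"] Suc b_def by auto
    thus ?thesis using Suc by simp
  qed
  have "b < length Lam" using 2 ne by linarith
  thus ?thesis using 1 3 by auto
qed

lemma per_N:
  fixes T :: "real \<Rightarrow> real" and Lam :: "nat list" and p N :: nat and lab :: "nat \<Rightarrow> nat \<times> nat"
  assumes ge2: "\<forall>b<length Lam. Lam!b \<ge> 2" and sum1: "(\<Sum>j<length Lam. 1/real(Lam!j)) = 1"
    and hT: "\<forall>j<length Lam. \<forall>x. branch_pt Lam j < x \<and> x < branch_pt Lam (Suc j) \<longrightarrow>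
         T x = real (Lam ! j) * (x - branch_pt Lam j)"
    and p: "p \<ge> 1" and pdv: "\<forall>b<length Lam. p dvd Lam!b"
    and lab1: "\<forall>b<length Lam. fst (lab b) < p \<and> snd (lab b) < Lam!b div p"
    and lab2: "\<forall>b<length Lam. \<forall>b'<length Lam. fst (lab b) = fst (lab b') \<longrightarrow> Lam!b = Lam!b'"
    and lab3: "\<forall>b<length Lam. \<forall>b'<length Lam. b \<noteq> b' \<and> Lam!b = Lam!b' \<longrightarrow> lab b \<noteq> lab b'"
    and dvN: "\<forall>b<length Lam. Lam!b dvd N" and Npos: "N > 0"
  shows "\<exists>U. unitary_mat N U \<and> (\<forall>i<N. \<forall>j<N. Bmat T N j i = (cmod (U i j))\<^sup>2)"
proof -
  let ?K = "Kf Lam N"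
  have KL: "?K (length Lam) = N" by (rule K_L[OF dvN Npos sum1])
  define br where "br j = (LEAST b. j < ?K (Suc b))" for j
  have brp: "br j < length Lam \<and> ?K (br j) \<le> j \<and> j < ?K (Suc (br j))" if "j < N" for j
    unfolding br_def using find_branch[of j Lam N] that KL by simp
  have ne: "length Lam > 0" using KL Npos by (cases "length Lam") (auto simp: Kf_def)
  define M where "M = N div p"
  have NpM: "N = p*M" using pdv dvN ne unfolding M_def by (metis dvd_mult_div_cancel dvd_trans)
  define d where "d j = Lam!(br j) div p" for j
  define B where "B j = d j * (j - ?K (br j))" for j
  define s where "s j = fst (lab (br j))" for j
  define k where "k j = snd (lab (br j))" for j
  have Lamd: "Lam!(br j) = p * d j" if "j < N" for j
    using pdv brp[OF that] unfolding d_def by auto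
  have p0: "p > 0" using p by simp
  have H: "d j > 0 \<and> d j dvd B j \<and> B j + d j \<le> M \<and> s j < p \<and> k j < d j" if j: "j < N" for j
  proof (intro conjI)
    show "d j > 0" using Lamd[OF j] ge2 brp[OF j] by (metis mult_0_right not_numeral_le_zero le_zero_eq neq0_conv)
    show "d j dvd B j" by (simp add: B_def)
    show "s j < p" "k j < d j" using lab1 brp[OF j] by (auto simp: s_def k_def d_def)
    define t where "t = j - ?K (br j)"
    have "t < N div Lam!(br j)" using brp[OF j] K_Suc[of Lam N "br j"] unfolding t_def by linarith
    hence "Suc t \<le> N div Lam!(br j)" by simp
    hence "Suc t * Lam!(br j) \<le> N div Lam!(br j) * Lam!(br j)" by (rule mult_le_mono1)
    also have "\<dots> = N" using dvN brp[OF j] by simp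
    finally have "p * (d j * Suc t) \<le> p * M" unfolding Lamd[OF j] NpM[symmetric] by (simp add: mult_ac)
    hence "d j * Suc t \<le> M" using p0 by simp
    thus "B j + d j \<le> M" unfolding B_def t_def by simp
  qed
  have P1: "d j = d j' \<and> (B j \<noteq> B j' \<or> k j \<noteq> k j')"
    if j: "j<N" "j'<N" "j\<noteq>j'" "s j = s j'" for j j'
  proof -
    have LL: "Lam!(br j) = Lam!(br j')" using lab2 brp[OF j(1)] brp[OF j(2)] j(4) unfolding s_def by auto
    hence dd: "d j = d j'" unfolding d_def by simp
    show ?thesis
    proof (cases "br j = br j'")
      case True
      have "j - ?K (br j) \<noteq> j' - ?K (br j')" using brp[OF j(1)] brp[OF j(2)] True j(3) by auto
      hence "B j \<noteq> B j'" unfolding B_def dd using H[OF j(2)] by simp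
      thus ?thesis using dd by simp
    next
      case False
      hence "lab (br j) \<noteq> lab (br j')" using lab3 brp[OF j(1)] brp[OF j(2)] LL by auto
      hence "k j \<noteq> k j'" using j(4) unfolding s_def k_def by (simp add: prod_eq_iff)
      thus ?thesis using dd by simp
    qed
  qed
  define U where "U = Uf p d B s k"
  show ?thesis
  proof (intro exI[of _ U] conjI allI impI)
    show "unitary_mat N U"
      unfolding U_def by (intro unitary_from_cols allI impI Uf_cols[OF p0 NpM H P1])
    fix i j assume i: "i < N" and j: "j < N"
    let ?b = "br j"
    have bpb: "branch_pt Lam ?b = real (?K ?b) / real N"
      using K_bp[OF dvN Npos] brp[OF j] by simp
    have bpS: "branch_pt Lam (Suc ?b) = real (?K (Suc ?b)) / real N"
      using K_bp[OF dvN Npos] brp[OF j] by simp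
    have Bm: "Bmat T N j i = (if Lam!?b*(j-?K ?b) \<le> i \<and> i < Lam!?b*(j-?K ?b) + Lam!?b then 1 / real (Lam!?b) else 0)"
    proof (rule cell_measure[OF Npos _ j])
      show "0 < Lam!?b" using ge2 brp[OF j] by (metis not_numeral_le_zero le_zero_eq neq0_conv)
      show "?K ?b \<le> j" using brp[OF j] by simp
      fix x assume x: "real j / real N < x" "x < real (Suc j) / real N"
      have "real (?K ?b) / real N \<le> real j / real N" using brp[OF j] Npos by (simp add: divide_right_mono)
      hence "branch_pt Lam ?b < x" using x bpb by linarith
      moreover have "real (Suc j) / real N \<le> real (?K (Suc ?b)) / real N"
        using brp[OF j] Npos by (intro divide_right_mono) auto
      hence "x < branch_pt Lam (Suc ?b)" using x bpS by linarith
      ultimately show "T x = real (Lam!?b) * (x - real (?K ?b) / real N)"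
        using hT brp[OF j] bpb by auto
    qed
    have Um: "(cmod (U i j))\<^sup>2 = (if B j \<le> i div p \<and> i div p < B j + d j then 1 / (real p * real (d j)) else 0)"
    proof -
      have pd: "real p * real (d j) > 0" using H[OF j] p0 by simp
      have nrm: "(cmod (complex_of_real (1 / sqrt (real p * real (d j))) * cis \<theta>))\<^sup>2 = 1/(real p * real (d j))" for \<theta>
      proof -
        have "cmod (complex_of_real (1 / sqrt (real p * real (d j))) * cis \<theta>) = 1 / sqrt (real p * real (d j))"
          unfolding norm_mult norm_cis norm_of_real using pd by simp
        thus ?thesis using pd by (simp add: power_divide)
      qed
      show ?thesis unfolding U_def Uf_def using nrm by simp
    qed
    have cond: "(Lam!?b*(j-?K ?b) \<le> i \<and> i < Lam!?b*(j-?K ?b) + Lam!?b) \<longleftrightarrow> (B j \<le> i div p \<and> i div p < B j + d j)"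
      unfolding Lamd[OF j] B_def using p0
      by (simp add: less_eq_div_iff_mult_less_eq div_less_iff_less_mult algebra_simps)
    have val: "1 / real (Lam!?b) = 1/(real p * real (d j))" by (simp add: Lamd[OF j])
    show "Bmat T N j i = (cmod (U i j))\<^sup>2" unfolding Bm Um val cond by (rule refl)
  qed
qed

theorem theorem4:
  fixes T :: "real \<Rightarrow> real" and Lam :: "nat list" and p :: nat and Lbar :: "nat list"
  assumes "cond1 T Lam"
    and "p \<ge> 1"
    and "sorted_wrt (<) Lbar"
    and "\<forall>i<length Lbar. Lbar ! i > 0"
    and "\<forall>i<length Lbar. \<forall>j<length Lbar. i \<noteq> j \<longrightarrow> coprime (Lbar ! i) (Lbar ! j)"
    and "set Lam = (\<lambda>b. p * b) ` set Lbar"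
  shows "quantizable T Lam"
proof -
  note c = assms(1)[unfolded cond1_def]
  have ge2: "\<forall>j<length Lam. Lam!j \<ge> 2" using c by (rule conjunct1[OF conjunct2])
  have sum1: "(\<Sum>j<length Lam. 1/real(Lam!j)) = 1" using c by (rule conjunct1[OF conjunct2[OF conjunct2]])
  have hT: "\<forall>j<length Lam. \<forall>x. branch_pt Lam j < x \<and> x < branch_pt Lam (Suc j) \<longrightarrow>
         T x = real (Lam ! j) * (x - branch_pt Lam j)"
    using c by (rule conjunct2[OF conjunct2[OF conjunct2[OF conjunct2]]])
  have cop: "\<forall>x\<in>set Lbar. \<forall>y\<in>set Lbar. x\<noteq>y \<longrightarrow> coprime x y"
  proof (intro ballI impI)
    fix x y assume x: "x \<in> set Lbar" and y: "y \<in> set Lbar" and xy: "x \<noteq> y"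
    obtain i where i: "i < length Lbar" "Lbar!i = x" using x by (auto simp: in_set_conv_nth)
    obtain j where j: "j < length Lbar" "Lbar!j = y" using y by (auto simp: in_set_conv_nth)
    have "i \<noteq> j" using i j xy by auto
    thus "coprime x y" using assms(5) i j by auto
  qed
  have pdv: "\<forall>b<length Lam. p dvd Lam!b"
  proof (intro allI impI)
    fix b assume "b < length Lam"
    hence "Lam!b \<in> set Lam" by simp
    hence "Lam!b \<in> (\<lambda>b. p * b) ` set Lbar" using assms(6) by simp
    thus "p dvd Lam!b" by auto
  qed
  from labels[OF ge2 sum1 assms(2) cop assms(6)] obtain lab :: "nat \<Rightarrow> nat \<times> nat" where
    labs: "(\<forall>b<length Lam. fst (lab b) < p \<and> snd (lab b) < Lam!b div p) \<and>
     (\<forall>b<length Lam. \<forall>b'<length Lam. fst (lab b) = fst (lab b') \<longrightarrow> Lam!b = Lam!b') \<and>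
     (\<forall>b<length Lam. \<forall>b'<length Lam. b \<noteq> b' \<and> Lam!b = Lam!b' \<longrightarrow> lab b \<noteq> lab b')" ..
  note lab1 = conjunct1[OF labs] and lab2 = conjunct1[OF conjunct2[OF labs]] and lab3 = conjunct2[OF conjunct2[OF labs]]
  define N0 where "N0 = prod_list Lam"
  have "0 \<notin> set Lam" using ge2 by (auto simp: in_set_conv_nth)
  hence "prod_list Lam \<noteq> 0" by (metis prod_list_zero_iff)
  hence N0pos: "N0 > 0" unfolding N0_def by (metis neq0_conv)
  have dvN0: "\<forall>b<length Lam. Lam!b dvd N0" unfolding N0_def using prod_list_dvd nth_mem by blast
  define Ns where "Ns k = N0 * 2^k" for k :: nat
  have dvNs: "\<forall>b<length Lam. Lam!b dvd Ns k" for k using dvN0 dvd_mult2 unfolding Ns_def by blast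
  have Nspos: "Ns k > 0" for k using N0pos unfolding Ns_def by simp
  show ?thesis unfolding quantizable_def
  proof (intro exI[of _ Ns] conjI allI)
    show "cond2 Lam Ns" unfolding cond2_def
    proof (intro conjI allI impI)
      show "1 \<le> Ns 0" using N0pos by (simp add: Ns_def)
      fix k
      show "Ns k dvd Ns (Suc k)" by (simp add: Ns_def)
      show "Ns k < Ns (Suc k)" using N0pos by (simp add: Ns_def)
    next
      fix j assume j: "j \<le> length Lam"
      have "branch_pt Lam j = real (Kf Lam (Ns 0) j) / real (Ns 0)"
        using K_bp[OF dvNs Nspos j] .
      moreover have "Kf Lam (Ns 0) j \<le> Ns 0"
      proof -
        have "Kf Lam (Ns 0) (length Lam) = Ns 0" by (rule K_L[OF dvNs Nspos sum1])
        moreover have "Kf Lam (Ns 0) j \<le> Kf Lam (Ns 0) (length Lam)" by (rule K_mono[OF j])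
        ultimately show ?thesis by simp
      qed
      ultimately show "\<exists>i\<le>Ns 0. branch_pt Lam j = real i / real (Ns 0)" by blast
    qed
  next
    fix k
    show "\<exists>U. unitary_mat (Ns k) U \<and> (\<forall>i<Ns k. \<forall>j<Ns k. Bmat T (Ns k) j i = (cmod (U i j))\<^sup>2)"
      by (rule per_N[OF ge2 sum1 hT assms(2) pdv lab1 lab2 lab3 dvNs Nspos])
  qed
qed

end
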